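(* Let $\alpha,\beta,\delta\in(0,1)$, $m=\alpha n^\beta$, $\lambda^*=\frac{\log_2(1+\delta)}{1-\beta}$, $\lambda<\lambda^*$, and $k>0$. Then $$\lim_{n\to\infty}\sum_{1\le w\le\lambda m/\log_2 n}\binom{n}{w}\frac{1}{2^m}\left(1+\left(1-2\frac{k(\log_2 m)^2}{m}\right)^w\right)^m=0.$$ *)

theory Defs
  imports Complex_Main
begin

end

theory Submission
  imports Defs "HOL-Real_Asymp.Real_Asymp"
begin

lemma aux1: fixes x :: real assumes "0 \<le> x" "x \<le> 1" shows "1/(1+x) \<le> 1 - x/2"
proof -
  have "1 \<le> (1 - x/2)*(1+x)" using assms by (simp add: algebra_simps) (smt (verit) mult_left_le_one_le)
  thus ?thesis using assms by (simp add: divide_le_eq)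
qed


lemma pow_div_fact_le_exp:
  fixes x :: real assumes "0 \<le> x" shows "x ^ w / fact w \<le> exp x"
proof -
  have s: "(\<lambda>n. x^n /\<^sub>R fact n) sums exp x" by (rule exp_converges)
  have "x ^ w / fact w = (\<Sum>n\<in>{w}. x^n /\<^sub>R fact n)" by (simp add: divide_inverse mult.commute)
  also have "\<dots> \<le> exp x"
  proof -
    have "(\<Sum>n\<in>{w}. x^n /\<^sub>R fact n) \<le> suminf (\<lambda>n. x^n /\<^sub>R fact n)"
      using summable_exp[of x] by (intro sum_le_suminf) (auto simp: assms)
    thus ?thesis using sums_unique[OF s] by simp
  qed
  finally show ?thesis .
qed

lemma choose_le_exp:
  fixes n w :: nat assumes "1 \<le> w" "1 \<le> n"
  shows "real (n choose w) \<le> exp (real w * (1 + ln (real n) - ln (real w)))"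
proof -
  have "real (n choose w) * fact w \<le> real n ^ w"
    using binomial_fact_pow[of n w] by (metis of_nat_fact of_nat_le_iff of_nat_mult of_nat_power)
  hence c: "real (n choose w) \<le> real n ^ w / fact w" by (simp add: field_simps)
  have f: "real w ^ w / fact w \<le> exp (real w)" by (rule pow_div_fact_le_exp) simp
  have "real n ^ w / fact w = (real n / real w) ^ w * (real w ^ w / fact w)"
    using assms by (simp add: power_divide)
  also have "\<dots> \<le> (real n / real w) ^ w * exp (real w)"
    using f by (intro mult_left_mono) auto
  also have "(real n / real w) ^ w = exp (real w * (ln (real n) - ln (real w)))"
  proof -
    have "(real n / real w) = exp (ln (real n) - ln (real w))" using assms by (simp add: exp_diff)
    hence "(real n / real w) ^ w = exp (ln (real n) - ln (real w)) ^ w" by simp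
    also have "\<dots> = exp (real w * (ln (real n) - ln (real w)))" by (simp add: exp_of_nat_mult)
    finally show ?thesis .
  qed
  also have "exp (real w * (ln (real n) - ln (real w))) * exp (real w) = exp (real w * (1 + ln (real n) - ln (real w)))"
    by (simp add: exp_add[symmetric] algebra_simps)
  finally show ?thesis using c by linarith
qed


lemma term_bound:
  fixes n w :: nat and M k lm eps L D T c g Lam rho :: real
  assumes M: "M > 0" and k: "k > 0" and lm: "lm > 0" and eps: "eps = 2*k*lm^2/M" "eps < 1"
    and L: "L = ln (real n)" "L > 0"
    and F3: "3*L \<le> k*lm^2/2"
    and D: "D = 1 + L - ln M + ln(2*k*lm^2)"
    and F4: "T*D \<le> c/2*(2*k*lm^2)"
    and c: "c = (1 - exp(-1))/2"
    and F5: "2*L \<le> c*M/2"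
    and F6: "D \<le> rho*L" "0 \<le> rho"
    and F6': "Lam*ln 2*rho + exp(-T) - ln 2 \<le> -g/3"
    and F7: "2*L \<le> M*g/3"
    and w: "1 \<le> w" "real w \<le> Lam*M/log 2 (real n)"
  shows "real (n choose w) * (1/2 powr M) * (1+(1-eps)^w) powr M \<le> exp(-2*L)"
proof -
  have n: "1 \<le> n" using L by (cases n) auto
  have epos: "0 < eps" using eps M k lm by auto
  define q where "q = (1-eps)^w"
  have q0: "0 \<le> q" using eps by (simp add: q_def)
  have qe: "q \<le> exp (-(eps*w))"
  proof -
    have "q \<le> exp (-eps) ^ w" unfolding q_def
      using eps epos exp_ge_add_one_self[of "-eps"] by (intro power_mono) auto
    also have "\<dots> = exp (-(eps*w))" by (simp add: exp_of_nat_mult[symmetric] mult.commute)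
    finally show ?thesis .
  qed
  have split: "(1/2 powr M) * (1+q) powr M = exp (M * (ln (1+q) - ln 2))"
    using q0 by (simp add: powr_def exp_diff right_diff_distrib field_simps)
  define X where "X = ln (1+q) - ln 2"
  have X1: "X \<le> (q-1)/2"
  proof -
    have "X = ln ((1+q)/2)" unfolding X_def using q0 by (simp add: ln_div)
    also have "\<dots> \<le> (1+q)/2 - 1" using q0 by (intro ln_le_minus_one) auto
    finally show ?thesis by simp
  qed
  have X2: "X \<le> q - ln 2" unfolding X_def using q0 ln_add_one_self_le_self[of q] by simp
  have goal: "real (n choose w) * exp (M * X) \<le> exp(-2*L)"
  proof (cases "eps * w \<le> 1")
    case True
    have C: "real (n choose w) \<le> exp (w * L)"
    proof -
      have "real (n choose w) \<le> real (n choose w) * fact w"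
        using fact_ge_1[of w, where 'a=real] by (simp add: mult_le_cancel_left1)
      also have "\<dots> \<le> real n ^ w"
        using binomial_fact_pow[of n w] by (metis of_nat_fact of_nat_le_iff of_nat_mult of_nat_power)
      also have "\<dots> = exp (w * L)" using n L by (simp add: exp_of_nat_mult)
      finally show ?thesis .
    qed
    have "q \<le> 1/(1 + eps*w)"
    proof -
      have "exp (eps*w) \<ge> 1 + eps*w" by (rule exp_ge_add_one_self)
      moreover have "0 < 1 + eps*w" using epos by (simp add: add_pos_nonneg)
      ultimately have "1/exp (eps*w) \<le> 1/(1+eps*w)" by (intro divide_left_mono) auto
      hence "exp (-(eps*w)) \<le> 1/(1+eps*w)" by (simp add: exp_minus inverse_eq_divide)
      thus ?thesis using qe by linarith
    qed
    also have "\<dots> \<le> 1 - eps*w/2" using True epos by (intro aux1) auto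
    finally have "q \<le> 1 - eps*w/2" .
    hence "M*X \<le> M*(-(eps*w/4))" using X1 M by (intro mult_left_mono) auto
    also have "\<dots> = - (w*(k*lm^2/2))" using eps M by (simp add: field_simps)
    finally have MX: "M*X \<le> - (w*(k*lm^2/2))" .
    have "real (n choose w) * exp (M*X) \<le> exp (w*L) * exp (- (w*(k*lm^2/2)))"
      using C MX by (intro mult_mono) auto
    also have "\<dots> = exp (w*(L - k*lm^2/2))" by (simp add: exp_add[symmetric] algebra_simps)
    also have "\<dots> \<le> exp (-2*L)"
    proof -
      have "w*(L - k*lm^2/2) \<le> w * (-2*L)" using F3 by (intro mult_left_mono) auto
      also have "\<dots> \<le> -2*L" using w L by (simp add: mult_le_cancel_right1)
      finally show ?thesis by simp
    qed
    finally show ?thesis .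
  next
    case False
    have C: "real (n choose w) \<le> exp (w * D)"
    proof -
      have "ln (real w) \<ge> ln (1/eps)" using False epos w(1) by (subst ln_le_cancel_iff) (auto simp: field_simps)
      also have "ln (1/eps) = ln M - ln (2*k*lm^2)" using eps M k lm by (simp add: ln_div)
      finally have "1 + L - ln (real w) \<le> D" using D by simp
      hence "w * (1 + ln (real n) - ln (real w)) \<le> w * D" using L by (intro mult_left_mono) auto
      thus ?thesis using choose_le_exp[OF w(1) n] by (meson exp_le_cancel_iff order_trans)
    qed
    show ?thesis
    proof (cases "eps * w \<le> T")
      case True
      have wD: "w * D \<le> c*M/2"
      proof (cases "D \<ge> 0")
        case True2: True
        have "w \<le> T / eps" using True epos by (simp add: field_simps mult.commute)
        hence "w * D \<le> (T/eps) * D" using True2 by (intro mult_right_mono) auto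
        also have "\<dots> = T*D*M/(2*k*lm^2)" using eps by simp
        also have "\<dots> \<le> c/2*(2*k*lm^2)*M/(2*k*lm^2)" using F4 M k lm
          by (intro divide_right_mono mult_right_mono) auto
        also have "\<dots> = c*M/2" using k lm by simp
        finally show ?thesis .
      next
        case False
        have "c > 0" unfolding c by simp
        thus ?thesis using False M by (smt (verit) mult_nonneg_nonpos of_nat_0_le_iff divide_pos_pos mult_pos_pos)
      qed
      have "q \<le> exp (-1)" using qe False by (smt (verit) exp_mono)
      hence "M * X \<le> M * (-c)" using X1 M c by (intro mult_left_mono) auto
      hence "M*X \<le> -(c*M)" by (simp add: algebra_simps)
      hence "w*D + M*X \<le> -2*L" using wD F5 by linarith
      hence "exp (w*D) * exp (M*X) \<le> exp (-2*L)" by (simp add: exp_add[symmetric])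
      thus ?thesis using C by (smt (verit) exp_gt_zero mult_right_mono)
    next
      case False
      have "log 2 (real n) = L / ln 2" using L by (simp add: log_def)
      hence wle: "real w \<le> Lam*M*ln 2/L" using w(2) by simp
      have "w * D \<le> w * (rho*L)" using F6 by (intro mult_left_mono) auto
      also have "\<dots> \<le> (Lam*M*ln 2/L) * (rho * L)" using wle F6 L by (intro mult_right_mono) auto
      also have "\<dots> = M*(Lam*ln 2*rho)" using L by simp
      finally have wD: "w*D \<le> M*(Lam*ln 2*rho)" .
      have "q \<le> exp (-T)" using qe False by (smt (verit) exp_mono)
      hence "M * X \<le> M * (exp (-T) - ln 2)" using X2 M by (intro mult_left_mono) auto
      hence "w*D + M*X \<le> M*(Lam*ln 2*rho + exp(-T) - ln 2)" using wD by (simp add: algebra_simps)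
      also have "\<dots> \<le> M*(-g/3)" using F6' M by (intro mult_left_mono) auto
      finally have "w*D + M*X \<le> -2*L" using F7 by simp
      hence "exp (w*D) * exp (M*X) \<le> exp (-2*L)" by (simp add: exp_add[symmetric])
      thus ?thesis using C by (smt (verit) exp_gt_zero mult_right_mono)
    qed
  qed
  have "real (n choose w) * (1/2 powr M) * (1+(1-eps)^w) powr M = real (n choose w) * ((1/2 powr M) * (1+q) powr M)"
    unfolding q_def by (simp only: mult.assoc)
  also have "\<dots> = real (n choose w) * exp (M * X)" using split unfolding X_def by simp
  finally show ?thesis using goal by simp
qed


theorem lemma11:
  fixes \<alpha> \<beta> \<delta> lam k :: real
  assumes "0 < \<alpha>" "\<alpha> < 1" "0 < \<beta>" "\<beta> < 1" "0 < \<delta>" "\<delta> < 1"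
    and "lam < log 2 (1 + \<delta>) / (1 - \<beta>)"
    and "0 < k"
  shows "((\<lambda>n::nat. let m = \<alpha> * real n powr \<beta> in
            (\<Sum>w\<in>{w::nat. 1 \<le> w \<and> real w \<le> lam * m / log 2 (real n)}.
               real (n choose w) * (1 / 2 powr m)
               * (1 + (1 - 2 * k * (log 2 m)^2 / m) ^ w) powr m))
          \<longlonglongrightarrow> 0)"
proof -
  note a = assms
  define Lam where "Lam = max lam (1/(2*(1-\<beta>)))"
  have "log 2 (1+\<delta>) < log 2 2" using a by (subst log_less_cancel_iff) auto
  hence l2: "log 2 (1+\<delta>) < 1" by simp
  have "lam < 1/(1-\<beta>)" using a(7) l2 a(4) by (smt (verit) divide_strict_right_mono)
  hence "lam*(1-\<beta>) < 1" using a(4) by (simp add: field_simps)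
  moreover have "(1/(2*(1-\<beta>)))*(1-\<beta>) < 1" using a(4) by simp
  ultimately have LamB: "Lam*(1-\<beta>) < 1" unfolding Lam_def by (simp add: max_def)
  have "Lam \<ge> 1/(2*(1-\<beta>))" unfolding Lam_def by simp
  moreover have "1/(2*(1-\<beta>)) > 0" using a(4) by simp
  ultimately have Lam_pos: "Lam > 0" by linarith
  define g where "g = ln 2 * (1 - Lam*(1-\<beta>))"
  have g_pos: "g > 0" unfolding g_def using LamB by simp
  define T where "T = ln (3/g)"
  have eT: "exp (-T) = g/3" unfolding T_def using g_pos by (simp add: exp_minus ln_div exp_diff)
  define eta where "eta = g/(3*Lam*ln 2)"
  have eta_pos: "eta > 0" unfolding eta_def using g_pos Lam_pos by simp
  define rho where "rho = (1-\<beta>) + eta"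
  have rho_pos: "rho \<ge> 0" unfolding rho_def using eta_pos a(4) by simp
  have F6': "Lam*ln 2*rho + exp(-T) - ln 2 \<le> -g/3"
    unfolding rho_def eT eta_def using Lam_pos by (simp add: g_def field_simps)
  define c where "c = (1 - exp(-1::real))/2"
  have c_pos: "c > 0" unfolding c_def by simp
  define Q where "Q = (\<lambda>x::real.
     2 \<le> x \<and>
     2*k*(log 2 (\<alpha>*x powr \<beta>))^2/(\<alpha>*x powr \<beta>) < 1 \<and>
     log 2 (\<alpha>*x powr \<beta>) > 0 \<and>
     3*ln x \<le> k*(log 2 (\<alpha>*x powr \<beta>))^2/2 \<and>
     T*(1 + ln x - ln (\<alpha>*x powr \<beta>) + ln(2*k*(log 2 (\<alpha>*x powr \<beta>))^2)) \<le> c/2 * (2*k*(log 2 (\<alpha>*x powr \<beta>))^2) \<and>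
     2*ln x \<le> c*(\<alpha>*x powr \<beta>)/2 \<and>
     1 + ln x - ln (\<alpha>*x powr \<beta>) + ln(2*k*(log 2 (\<alpha>*x powr \<beta>))^2) \<le> rho * ln x \<and>
     2*ln x \<le> (\<alpha>*x powr \<beta>)*g/3 \<and>
     Lam*(\<alpha>*x powr \<beta>)/log 2 x \<le> x)"
  have evr: "eventually Q at_top"
  proof -
    have rho': "rho = (1-\<beta>) + eta" by (rule rho_def)
    note p = a(1,3,4,8) c_pos eta_pos g_pos Lam_pos
    show ?thesis unfolding Q_def rho'
      apply (intro eventually_conj)
      using p by real_asymp+
  qed
  have evn: "eventually (\<lambda>n. Q (real n)) sequentially"
    using filterlim_real_sequentially evr by (rule filterlim_iff[THEN iffD1, rule_format])
  define f where "f = (\<lambda>n::nat. let m = \<alpha> * real n powr \<beta> in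
            (\<Sum>w\<in>{w::nat. 1 \<le> w \<and> real w \<le> lam * m / log 2 (real n)}.
               real (n choose w) * (1 / 2 powr m)
               * (1 + (1 - 2 * k * (log 2 m)^2 / m) ^ w) powr m))"
  have nonneg: "\<And>n. 0 \<le> f n" unfolding f_def Let_def by (intro sum_nonneg) auto
  have bound: "eventually (\<lambda>n. f n \<le> 1 / real n) sequentially"
    using evn
  proof eventually_elim
    case (elim n)
    define x where "x = real n"
    define M where "M = \<alpha> * x powr \<beta>"
    define lm where "lm = log 2 M"
    define eps where "eps = 2*k*lm^2/M"
    define L where "L = ln x"
    define D where "D = 1 + L - ln M + ln(2*k*lm^2)"
    define t where "t = (\<lambda>w. real (n choose w) * (1 / 2 powr M) * (1 + (1 - 2 * k * (log 2 M)^2 / M) ^ w) powr M)"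
    have Qx: "Q x" using elim x_def by simp
    have x2: "2 \<le> x" by (rule Qx[unfolded Q_def, THEN conjunct1])
    have Mpos: "M > 0" unfolding M_def using a(1) x2 by simp
    have Lpos: "L > 0" unfolding L_def using x2 by simp
    have lx: "log 2 x > 0" using x2 by simp
    define S where "S = {w::nat. 1 \<le> w \<and> real w \<le> lam * M / log 2 x}"
    define S' where "S' = {w::nat. 1 \<le> w \<and> real w \<le> Lam * M / log 2 x}"
    have SS': "S \<subseteq> S'" unfolding S_def S'_def
    proof safe
      fix w :: nat assume "real w \<le> lam * M / log 2 x"
      also have "lam * M / log 2 x \<le> Lam * M / log 2 x"
        using Mpos lx unfolding Lam_def by (intro divide_right_mono mult_right_mono) auto
      finally show "real w \<le> Lam * M / log 2 x" .
    qed
    have S'n: "S' \<subseteq> {1..n}"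
    proof
      fix w assume "w \<in> S'"
      hence "1 \<le> w" "real w \<le> Lam * M / log 2 x" unfolding S'_def by auto
      moreover have "Lam * M / log 2 x \<le> x" unfolding M_def by (rule Qx[unfolded Q_def, THEN conjunct2, THEN conjunct2, THEN conjunct2, THEN conjunct2, THEN conjunct2, THEN conjunct2, THEN conjunct2, THEN conjunct2])
      ultimately show "w \<in> {1..n}" unfolding x_def by auto
    qed
    have fin: "finite S'" using S'n finite_subset by blast
    have qc0: "2*k*lm^2/M < 1" unfolding D_def lm_def L_def M_def by (rule Qx[unfolded Q_def, THEN conjunct2, THEN conjunct1])
    have qc1: "lm > 0" unfolding D_def lm_def L_def M_def by (rule Qx[unfolded Q_def, THEN conjunct2, THEN conjunct2, THEN conjunct1])
    have qc2: "3*L \<le> k*lm^2/2" unfolding D_def lm_def L_def M_def by (rule Qx[unfolded Q_def, THEN conjunct2, THEN conjunct2, THEN conjunct2, THEN conjunct1])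
    have qc3: "T*D \<le> c/2*(2*k*lm^2)" unfolding D_def lm_def L_def M_def by (rule Qx[unfolded Q_def, THEN conjunct2, THEN conjunct2, THEN conjunct2, THEN conjunct2, THEN conjunct1])
    have qc4: "2*L \<le> c*M/2" unfolding D_def lm_def L_def M_def by (rule Qx[unfolded Q_def, THEN conjunct2, THEN conjunct2, THEN conjunct2, THEN conjunct2, THEN conjunct2, THEN conjunct1])
    have qc5: "D \<le> rho*L" unfolding D_def lm_def L_def M_def by (rule Qx[unfolded Q_def, THEN conjunct2, THEN conjunct2, THEN conjunct2, THEN conjunct2, THEN conjunct2, THEN conjunct2, THEN conjunct1])
    have qc6: "2*L \<le> M*g/3" unfolding D_def lm_def L_def M_def by (rule Qx[unfolded Q_def, THEN conjunct2, THEN conjunct2, THEN conjunct2, THEN conjunct2, THEN conjunct2, THEN conjunct2, THEN conjunct2, THEN conjunct1])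
    note Qc = qc0 qc1 qc2 qc3 qc4 qc5 qc6
    have Ln: "L = ln (real n)" by (simp add: L_def x_def)
    have tb: "\<And>w. w \<in> S' \<Longrightarrow> t w \<le> exp (-2*L)"
    proof -
      fix w assume "w \<in> S'"
      hence w: "1 \<le> w" "real w \<le> Lam * M / log 2 (real n)" unfolding S'_def x_def by auto
      show "t w \<le> exp (-2*L)" unfolding t_def lm_def[symmetric]
        using term_bound[OF Mpos a(8) _ refl _ Ln Lpos _ D_def _ c_def _ _ rho_pos F6' _ w] Qc by blast
    qed
    have "f n = sum t S" unfolding f_def t_def S_def Let_def M_def x_def by simp
    also have "\<dots> \<le> sum t S'" using fin SS' by (intro sum_mono2) (auto simp: t_def)
    also have "\<dots> \<le> sum (\<lambda>_. exp (-2*L)) S'" using tb by (intro sum_mono) auto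
    also have "\<dots> = card S' * exp (-2*L)" by simp
    also have "\<dots> \<le> real n * exp (-2*L)"
      using card_mono[OF _ S'n] by (intro mult_right_mono) auto
    also have "exp (-2*L) = 1/(x*x)"
    proof -
      have "exp (L+L) = x*x" unfolding exp_add L_def using x2 by simp
      hence "exp (2*L) = x*x" by (simp only: mult_2)
      have "exp (-2*L) = exp (-(2*L))" by simp
      also have "\<dots> = inverse (exp (2*L))" by (rule exp_minus)
      finally show ?thesis using \<open>exp (2*L) = x*x\<close> by (simp add: divide_inverse)
    qed
    also have "real n * (1/(x*x)) = 1 / real n" using x2 unfolding x_def by (simp add: field_simps power2_eq_square)
    finally show ?case .
  qed
  have "f \<longlonglongrightarrow> 0"
    by (rule tendsto_sandwich[OF _ bound tendsto_const lim_1_over_n]) (simp add: nonneg)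
  thus ?thesis unfolding f_def .
qed

end
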